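(* Under the hypotheses of Proposition 5.1 (namely: $X$ a real separable Hilbert space, $F:X\to X$ monotone and hemicontinuous, $F(x^\dagger)=y$, $\bar x\in X$, $F$ Fréchet differentiable on $\mathcal B_r(x^\dagger)$ with $r>\|x^\dagger-\bar x\|$ and $x\mapsto F'(x)$ continuous there, the nonlinearity condition $(F'(\tilde x)-F'(x))v=F'(x)g(\tilde x,x,v)$ with $\|g(\tilde x,x,v)\|\le k_0\|\tilde x-x\|\|v\|$ for all $\tilde x,x\in\mathcal B_r(x^\dagger)$, $v\in X$, and $k_0\|x^\dagger-\bar x\|<2$), if moreover $x^\dagger-\bar x\perp\mathcal N(F'(x^\dagger))$, then $\lim_{\alpha\to0}\|x_\alpha-x^\dagger\|=0$, where $x_\alpha$ solves $F(x_\alpha)+\alpha(x_\alpha-\bar x)=y$.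
   Context: Monotone: $\langle F(x)-F(\tilde x),x-\tilde x\rangle\ge0$; hemicontinuous: $t\mapsto\langle F(x+tv),z\rangle$ continuous on $[0,1]$. $\mathcal N(\cdot)$ denotes the null space; $\mathcal B_r(x^\dagger)$ the closed ball of radius $r$ around $x^\dagger$. *)

theory Defs
  imports "HOL-Analysis.Analysis"
begin

definition monotone_op :: "('a::real_inner \<Rightarrow> 'a) \<Rightarrow> bool" where
  "monotone_op F \<longleftrightarrow> (\<forall>x x'. inner (F x - F x') (x - x') \<ge> 0)"

definition hemicontinuous :: "('a::real_inner \<Rightarrow> 'a) \<Rightarrow> bool" where
  "hemicontinuous F \<longleftrightarrow>
     (\<forall>x v z. continuous_on {0..1} (\<lambda>t::real. inner (F (x + t *\<^sub>R v)) z))"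

end

theory Submission imports Defs begin

lemma parallelo:
  fixes x y :: "'a::real_inner"
  shows "norm (x - y)^2 + norm (x + y)^2 = 2 * norm x ^2 + 2 * norm y ^2"
  by (simp add: power2_norm_eq_inner inner_simps algebra_simps)

lemma variational:
  fixes q u :: "'a::real_inner"
  assumes "\<And>t::real. norm q ^2 \<le> norm (q - t *\<^sub>R u) ^2"
  shows "inner q u = 0"
proof (cases "u = 0")
  case True then show ?thesis by simp
next
  case False
  define c where "c = inner q u"
  define t where "t = c / (norm u)^2"
  have nu: "(norm u)^2 > 0" using False by simp
  have "norm (q - t *\<^sub>R u) ^2 = norm q ^2 - 2*t*c + t^2 * (norm u)^2"
    unfolding power2_norm_eq_inner by (simp add: inner_simps algebra_simps c_def inner_commute power2_eq_square)
  also have "\<dots> = norm q ^2 - c^2/(norm u)^2"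
    using nu by (simp add: t_def field_simps power2_eq_square)
  finally have "c^2/(norm u)^2 \<le> 0" using assms[of t] by simp
  then have "c^2 \<le> 0" using nu by (simp add: divide_le_0_iff)
  then show ?thesis unfolding c_def by simp
qed

lemma proj_exists:
  fixes M :: "'a::{real_inner,complete_space} set"
  assumes sM: "subspace M"
  shows "\<exists>m \<in> closure M. \<forall>u\<in>M. inner (p - m) u = 0"
proof -
  define \<delta> where "\<delta> = Inf ((\<lambda>m. norm (p - m)) ` M)"
  have ne: "(\<lambda>m. norm (p - m)) ` M \<noteq> {}" using subspace_0[OF sM] by auto
  have bdd: "bdd_below ((\<lambda>m. norm (p - m)) ` M)" by (auto intro: bdd_belowI[of _ 0])
  have lb: "\<delta> \<le> norm (p - m)" if "m \<in> M" for m
    unfolding \<delta>_def using bdd that by (auto intro: cInf_lower)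
  have d0: "\<delta> \<ge> 0" unfolding \<delta>_def using ne by (auto intro: cInf_greatest)
  have "\<exists>m\<in>M. norm (p - m) < \<delta> + 1/(Suc n)" for n
  proof -
    have "Inf ((\<lambda>m. norm (p - m)) ` M) < \<delta> + 1/(Suc n)" unfolding \<delta>_def by simp
    from cInf_lessD[OF ne this] show ?thesis by auto
  qed
  then obtain ms where ms: "\<And>n. ms n \<in> M" "\<And>n. norm (p - ms n) < \<delta> + 1/(Suc n)"
    by metis
  define K where "K = 2*\<delta> + 1"
  have sq: "norm (p - ms n)^2 \<le> \<delta>^2 + K/(Suc n)" for n
  proof -
    have a: "norm (p - ms n) \<le> \<delta> + 1/(Suc n)" using ms(2)[of n] by simp
    have "norm (p - ms n)^2 \<le> (\<delta> + 1/(Suc n))^2"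
      using a by (intro power_mono) auto
    also have "\<dots> = \<delta>^2 + (2*\<delta> + 1/(Suc n))/(Suc n)"
    proof -
      define s where "s = real (Suc n)"
      have "s > 0" unfolding s_def by simp
      then have "(\<delta> + 1/s)^2 = \<delta>^2 + (2*\<delta> + 1/s)/s" by (simp add: power2_eq_square field_simps)
      then show ?thesis unfolding s_def .
    qed
    also have "\<dots> \<le> \<delta>^2 + K/(Suc n)"
      unfolding K_def by (intro add_left_mono divide_right_mono) (auto simp: field_simps)
    finally show ?thesis .
  qed
  have dd: "norm (ms i - ms j)^2 \<le> 2*K/(Suc i) + 2*K/(Suc j)" for i j
  proof -
    have mid: "(1/2) *\<^sub>R (ms i + ms j) \<in> M"
      using ms(1) sM by (simp add: subspace_add subspace_scale)
    have "\<delta> \<le> norm (p - (1/2) *\<^sub>R (ms i + ms j))" using lb[OF mid] .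
    then have "\<delta>^2 \<le> norm (p - (1/2) *\<^sub>R (ms i + ms j))^2"
      using d0 by (intro power_mono) auto
    moreover have "norm ((p - ms j) + (p - ms i)) = 2 * norm (p - (1/2) *\<^sub>R (ms i + ms j))"
    proof -
      have "(p - ms j) + (p - ms i) = 2 *\<^sub>R (p - (1/2) *\<^sub>R (ms i + ms j))"
        by (simp add: algebra_simps scaleR_2)
      then show ?thesis by simp
    qed
    moreover have "norm ((p - ms j) - (p - ms i))^2 + norm ((p - ms j) + (p - ms i))^2
       = 2 * norm (p - ms j)^2 + 2 * norm (p - ms i)^2" by (rule parallelo)
    moreover have "(p - ms j) - (p - ms i) = ms i - ms j" by simp
    ultimately have "norm (ms i - ms j)^2 \<le> 2 * norm (p - ms j)^2 + 2 * norm (p - ms i)^2 - 4*\<delta>^2"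
      by (simp add: power_mult_distrib)
    then show ?thesis using sq[of i] sq[of j] by simp
  qed
  have Kpos: "K > 0" using d0 unfolding K_def by simp
  have "Cauchy ms"
  proof (rule metric_CauchyI)
    fix e :: real assume e: "e > 0"
    obtain N :: nat where N: "4*K/e^2 < N" using reals_Archimedean2 by blast
    have "dist (ms i) (ms j) < e" if "i \<ge> N" "j \<ge> N" for i j
    proof -
      have "2*K/(Suc i) \<le> 2*K/(Suc N)" "2*K/(Suc j) \<le> 2*K/(Suc N)"
        using that Kpos by (auto intro!: divide_left_mono)
      moreover have "4*K/(Suc N) < e^2"
        using N e by (simp add: field_simps) (smt (verit) zero_less_power)
      ultimately have "norm (ms i - ms j)^2 < e^2" using dd[of i j] by simp
      then show ?thesis using e by (simp add: dist_norm power_less_imp_less_base)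
    qed
    then show "\<exists>N. \<forall>m\<ge>N. \<forall>n\<ge>N. dist (ms m) (ms n) < e" by blast
  qed
  then obtain m where lim: "ms \<longlonglongrightarrow> m" using Cauchy_convergent_iff convergent_def by blast
  have mcl: "m \<in> closure M" using ms(1) lim by (auto simp: closure_sequential)
  have inv: "(\<lambda>n. 1/ real (Suc n)) \<longlonglongrightarrow> 0"
    by (rule LIMSEQ_inverse_real_of_nat[unfolded inverse_eq_divide])
  have "norm (p - m) \<le> \<delta>"
  proof (rule tendsto_le[OF trivial_limit_sequentially])
    show "(\<lambda>n. \<delta> + 1/(Suc n)) \<longlonglongrightarrow> \<delta>" using tendsto_add[OF tendsto_const inv] by simp
    show "(\<lambda>n. norm (p - ms n)) \<longlonglongrightarrow> norm (p - m)" by (intro tendsto_intros lim)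
    show "\<forall>\<^sub>F n in sequentially. norm (p - ms n) \<le> \<delta> + 1 / real (Suc n)"
      using ms(2) by (simp add: less_imp_le)
  qed
  moreover have "\<delta> \<le> norm (p - m - t *\<^sub>R u)" if "u \<in> M" for u t
  proof (rule tendsto_le[OF trivial_limit_sequentially])
    show "(\<lambda>n. norm (p - ms n - t *\<^sub>R u)) \<longlonglongrightarrow> norm (p - m - t *\<^sub>R u)"
      by (intro tendsto_intros lim)
    show "(\<lambda>n. \<delta>) \<longlonglongrightarrow> \<delta>" by simp
    have "ms n + t *\<^sub>R u \<in> M" for n using ms(1) that sM by (simp add: subspace_add subspace_scale)
    then show "\<forall>\<^sub>F n in sequentially. \<delta> \<le> norm (p - ms n - t *\<^sub>R u)"
      using lb by (simp add: diff_diff_eq)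
  qed
  ultimately have "inner (p - m) u = 0" if "u \<in> M" for u
    using that by (intro variational) (metis norm_ge_zero order_trans power_mono)
  then show ?thesis using mcl by blast
qed

lemma riesz:
  fixes f :: "'a::{real_inner,complete_space} \<Rightarrow> real"
  assumes bl: "bounded_linear f"
  shows "\<exists>v. \<forall>u. f u = inner v u"
proof (cases "\<forall>u. f u = 0")
  case True then show ?thesis by (intro exI[of _ 0]) simp
next
  case False
  then obtain z0 where z0: "f z0 \<noteq> 0" by blast
  interpret f: bounded_linear f by fact
  define N where "N = {u. f u = 0}"
  have sN: "subspace N" unfolding N_def subspace_def by (simp add: f.add f.scale)
  have cN: "closed N" unfolding N_def
    by (intro closed_Collect_eq continuous_intros f.continuous_on continuous_on_id)
  obtain m where m: "m \<in> N" "\<And>u. u \<in> N \<Longrightarrow> inner (z0 - m) u = 0"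
    using proj_exists[OF sN, of z0] cN closure_closed by metis
  define z where "z = z0 - m"
  have fz: "f z = f z0" using m(1) unfolding z_def N_def by (simp add: f.diff)
  have zn: "z \<noteq> 0" using fz z0 by auto
  have key: "inner z u = f u / f z * (norm z)^2" for u
  proof -
    have "u - (f u / f z) *\<^sub>R z \<in> N" unfolding N_def using fz z0 by (simp add: f.diff f.scale)
    then have "inner z (u - (f u / f z) *\<^sub>R z) = 0" using m(2) unfolding z_def by blast
    then show ?thesis by (simp add: inner_simps power2_norm_eq_inner)
  qed
  show ?thesis
  proof (intro exI[of _ "(f z / (norm z)^2) *\<^sub>R z"] allI)
    fix u show "f u = inner ((f z / (norm z)^2) *\<^sub>R z) u"
      using key[of u] zn fz z0 by simp
  qed
qed

theorem corollary5p2: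
  fixes F :: "'a::{real_inner, complete_space} \<Rightarrow> 'a"
    and F' :: "'a \<Rightarrow> ('a \<Rightarrow>\<^sub>L 'a)"
    and g :: "'a \<Rightarrow> 'a \<Rightarrow> 'a \<Rightarrow> 'a"
    and xdag xbar y :: 'a and r k0 :: real
    and xa :: "real \<Rightarrow> 'a"
  assumes separable: "separable_space (euclidean :: 'a topology)"
    and mono: "monotone_op F"
    and hemi: "hemicontinuous F"
    and sol: "F xdag = y"
    and r: "r > norm (xdag - xbar)"
    and deriv: "\<And>x. x \<in> cball xdag r \<Longrightarrow> (F has_derivative blinfun_apply (F' x)) (at x)"
    and cont: "continuous_on (cball xdag r) F'"
    and nonlin_eq: "\<And>x' x v. x' \<in> cball xdag r \<Longrightarrow> x \<in> cball xdag r \<Longrightarrow>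
        blinfun_apply (F' x' - F' x) v = blinfun_apply (F' x) (g x' x v)"
    and nonlin_bd: "\<And>x' x v. x' \<in> cball xdag r \<Longrightarrow> x \<in> cball xdag r \<Longrightarrow>
        norm (g x' x v) \<le> k0 * norm (x' - x) * norm v"
    and small: "k0 * norm (xdag - xbar) < 2"
    and orth: "\<And>v. blinfun_apply (F' xdag) v = 0 \<Longrightarrow> inner (xdag - xbar) v = 0"
    and xa: "\<And>\<alpha>. \<alpha> > 0 \<Longrightarrow> F (xa \<alpha>) + \<alpha> *\<^sub>R (xa \<alpha> - xbar) = y"
  shows "((\<lambda>\<alpha>. norm (xa \<alpha> - xdag)) \<longlongrightarrow> 0) (at_right 0)"
proof -
  define A where "A = F' xdag"
  define p where "p = xdag - xbar"
  define d where "d = norm p"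
  have Fxa: "F (xa \<alpha>) = y - \<alpha> *\<^sub>R ((xa \<alpha> - xdag) + p)" if "\<alpha> > 0" for \<alpha>
    using xa[OF that] unfolding p_def by (simp add: algebra_simps)
  have step1: "norm (xa \<alpha> - xdag)^2 + inner p (xa \<alpha> - xdag) \<le> 0" if a: "\<alpha> > 0" for \<alpha>
  proof -
    define e where "e = xa \<alpha> - xdag"
    have "inner (F (xa \<alpha>) - F xdag) (xa \<alpha> - xdag) \<ge> 0" using mono unfolding monotone_op_def by blast
    then have "inner (- \<alpha> *\<^sub>R (e + p)) e \<ge> 0" using Fxa[OF a] sol unfolding e_def by simp
    then have "\<alpha> * inner (e + p) e \<le> 0" by (simp add: inner_simps)
    then have "inner (e + p) e \<le> 0" using a by (simp add: mult_le_0_iff)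
    then show ?thesis unfolding e_def by (simp add: inner_simps power2_norm_eq_inner inner_commute)
  qed
  have nb: "norm (xa \<alpha> - xdag) \<le> d" if a: "\<alpha> > 0" for \<alpha>
  proof -
    define e where "e = xa \<alpha> - xdag"
    have "norm e ^2 \<le> - inner p e" using step1[OF a] unfolding e_def by simp
    also have "\<dots> \<le> norm p * norm e" using Cauchy_Schwarz_ineq2[of p e] by simp
    finally have "norm e * norm e \<le> d * norm e" unfolding d_def by (simp add: power2_eq_square)
    then have "norm e \<le> d" by (cases "norm e = 0") (auto simp: d_def)
    then show ?thesis unfolding e_def .
  qed
  define R where "R = {v. \<exists>w. \<forall>u. inner v u = inner w (A u)}"
  have sR: "subspace R"
  proof -
    have "0 \<in> R" unfolding R_def by (auto intro!: exI[of _ 0])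
    moreover have "x + z \<in> R" if xR: "x \<in> R" and zR: "z \<in> R" for x z
    proof -
      obtain w1 w2 where "\<forall>u. inner x u = inner w1 (A u)" "\<forall>u. inner z u = inner w2 (A u)"
        using xR zR unfolding R_def by blast
      then show ?thesis unfolding R_def by (auto intro!: exI[of _ "w1 + w2"] simp: inner_simps)
    qed
    moreover have "c *\<^sub>R x \<in> R" if xR: "x \<in> R" for x c
    proof -
      obtain w1 where "\<forall>u. inner x u = inner w1 (A u)" using xR unfolding R_def by blast
      then show ?thesis unfolding R_def by (auto intro!: exI[of _ "c *\<^sub>R w1"] simp: inner_simps)
    qed
    ultimately show ?thesis unfolding subspace_def by blast
  qed
  have pcl: "p \<in> closure R"
  proof -
    obtain m where m: "m \<in> closure R" "\<And>u. u \<in> R \<Longrightarrow> inner (p - m) u = 0"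
      using proj_exists[OF sR, of p] by blast
    define q where "q = p - m"
    have bl: "bounded_linear (\<lambda>u. inner (A q) (A u))"
      by (rule bounded_linear_compose[OF bounded_linear_inner_right blinfun.bounded_linear_right])
    obtain v0 where v0: "\<And>u. inner (A q) (A u) = inner v0 u" using riesz[OF bl] by blast
    have "v0 \<in> R" unfolding R_def using v0 by (auto intro!: exI[of _ "A q"])
    then have "inner q v0 = 0" using m(2) unfolding q_def by blast
    then have "inner (A q) (A q) = 0" using v0[of q] by (simp add: inner_commute)
    then have "A q = 0" by simp
    then have pq: "inner p q = 0" using orth unfolding A_def p_def by blast
    have "closure R \<subseteq> {x. inner q x = 0}"
      by (rule closure_minimal) (use m(2) in \<open>auto simp: q_def closed_hyperplane\<close>)
    then have "inner q m = 0" using m(1) by blast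
    then have "inner q q = 0" using pq unfolding q_def by (simp add: inner_simps inner_commute)
    then have "q = 0" by simp
    then show ?thesis using m(1) unfolding q_def by simp
  qed
  have step3: "norm (xa \<alpha> - xdag)^2 \<le> norm (p - v) * d + 2*\<alpha>*d*norm w
        + norm v * k0 * norm (xa \<alpha> - xdag)^2 / 2"
    if a: "\<alpha> > 0" and vw: "\<And>u. inner v u = inner w (A u)" for \<alpha> v w
  proof -
    define e where "e = xa \<alpha> - xdag"
    have ne: "norm e \<le> d" using nb[OF a] unfolding e_def .
    define c where "c = inner w (A e)"
    define K where "K = norm v * k0 * (norm e)^2"
    define \<psi> where "\<psi> t = inner w (F (xdag + t *\<^sub>R e))" for t
    have dh: "\<exists>D. DERIV (\<lambda>t. t*c + t^2/2*K - \<psi> t) t :> D \<and> D \<ge> 0"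
      if t: "0 \<le> t" "t \<le> 1" for t
    proof -
      define x' where "x' = xdag + t *\<^sub>R e"
      have "norm (t *\<^sub>R e) \<le> norm e" using t by (simp add: mult_left_le_one_le)
      then have x'b: "x' \<in> cball xdag r" using ne r unfolding x'_def d_def p_def
        by (simp add: dist_norm)
      have xdb: "xdag \<in> cball xdag r" using r by (simp add: order_trans[OF norm_ge_zero less_imp_le])
      have d1: "((\<lambda>s. xdag + s *\<^sub>R e) has_derivative (\<lambda>s. s *\<^sub>R e)) (at t)"
        by (auto intro!: derivative_eq_intros)
      have d2: "((\<lambda>s. F (xdag + s *\<^sub>R e)) has_derivative (\<lambda>s. blinfun_apply (F' x') (s *\<^sub>R e))) (at t)"
        using has_derivative_compose[OF d1 deriv[OF x'b[unfolded x'_def]]] unfolding x'_def .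
      define D where "D = inner w (blinfun_apply (F' x') e)"
      have d3: "(\<psi> has_derivative (\<lambda>s. inner w (blinfun_apply (F' x') (s *\<^sub>R e)))) (at t)"
        unfolding \<psi>_def by (rule bounded_linear.has_derivative[OF bounded_linear_inner_right d2])
      have d4: "(\<psi> has_field_derivative D) (at t)"
        unfolding has_field_derivative_def
        by (rule has_derivative_eq_rhs[OF d3]) (auto simp: D_def blinfun.scaleR_right)
      have d5: "DERIV (\<lambda>t. t*c + t^2/2*K - \<psi> t) t :> (c + t*K - D)"
        by (auto intro!: derivative_eq_intros d4)
      define gg where "gg = g x' xdag e"
      have "blinfun_apply (F' x' - A) e = A gg" unfolding gg_def A_def by (rule nonlin_eq[OF x'b xdb])
      then have "blinfun_apply (F' x') e = A e + A gg" by (simp add: blinfun.diff_left algebra_simps)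
      then have DD: "D = c + inner v gg" unfolding D_def c_def by (simp add: inner_simps vw)
      have "norm gg \<le> k0 * norm (x' - xdag) * norm e" unfolding gg_def by (rule nonlin_bd[OF x'b xdb])
      also have "\<dots> = k0 * t * (norm e)^2" unfolding x'_def using t by (simp add: power2_eq_square)
      finally have gb: "norm gg \<le> k0 * t * (norm e)^2" .
      have "inner v gg \<le> norm v * norm gg" by (rule norm_cauchy_schwarz)
      also have "\<dots> \<le> norm v * (k0 * t * (norm e)^2)" using gb by (simp add: mult_left_mono)
      finally have "inner v gg \<le> t * K" unfolding K_def by (simp add: algebra_simps)
      then show ?thesis using d5 DD by (intro exI[of _ "c + t*K - D"]) auto
    qed
    have "0*c + 0^2/2*K - \<psi> 0 \<le> 1*c + 1^2/2*K - \<psi> 1"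
      by (rule DERIV_nonneg_imp_nondecreasing[of 0 1]) (use dh in auto)
    then have h: "- c \<le> \<psi> 0 - \<psi> 1 + K/2" by simp
    have "\<psi> 0 = inner w y" unfolding \<psi>_def using sol by simp
    moreover have "\<psi> 1 = inner w (y - \<alpha> *\<^sub>R (e + p))" unfolding \<psi>_def e_def using Fxa[OF a] by simp
    ultimately have "\<psi> 0 - \<psi> 1 = \<alpha> * inner w (e + p)" by (simp add: inner_simps)
    also have "\<dots> \<le> \<alpha> * (norm w * norm (e + p))"
      using a by (intro mult_left_mono norm_cauchy_schwarz) auto
    also have "\<dots> \<le> \<alpha> * (norm w * (2*d))"
    proof -
      have "norm (e + p) \<le> 2*d" using ne norm_triangle_ineq[of e p] unfolding d_def by simp
      then show ?thesis using a by (intro mult_left_mono) auto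
    qed
    finally have h2: "- c \<le> 2*\<alpha>*d*norm w + K/2" using h by (simp add: algebra_simps)
    have "norm e ^2 \<le> - inner p e" using step1[OF a] unfolding e_def by simp
    also have "\<dots> = - inner (p - v) e - c" using vw[of e] unfolding c_def by (simp add: inner_simps)
    also have "\<dots> \<le> norm (p - v) * norm e - c" using Cauchy_Schwarz_ineq2[of "p - v" e] by simp
    also have "\<dots> \<le> norm (p - v) * d - c" using ne by (simp add: mult_left_mono)
    finally show ?thesis using h2 unfolding e_def K_def by simp
  qed
  show ?thesis
  proof (rule tendstoI)
    fix \<eta> :: real assume \<eta>: "\<eta> > 0"
    define c0 where "c0 = min (1/2) ((1 - k0*d/2)/2)"
    have c0: "c0 > 0" "c0 \<le> 1/2" "k0*d/2 \<le> 1 - 2*c0"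
      using small unfolding c0_def d_def p_def by (auto simp: min_def field_simps split: if_splits)
    define \<epsilon> where "\<epsilon> = min 1 (min (2*c0/(\<bar>k0\<bar>+1)) (c0*\<eta>^2/(2*(d+1))))"
    have d0: "d \<ge> 0" unfolding d_def by simp
    have \<epsilon>: "\<epsilon> > 0" "\<epsilon> \<le> 2*c0/(\<bar>k0\<bar>+1)" "\<epsilon> \<le> c0*\<eta>^2/(2*(d+1))"
      using c0 \<eta> d0 unfolding \<epsilon>_def by auto
    obtain v where v: "v \<in> R" "dist v p < \<epsilon>" using pcl \<epsilon>(1) closure_approachable by blast
    obtain w where vw: "\<And>u. inner v u = inner w (A u)" using v(1) unfolding R_def by blast
    define b where "b = c0*\<eta>^2/(4*(d+1)*(norm w+1))"
    have b: "b > 0" using c0 \<eta> d0 norm_ge_zero[of w] unfolding b_def by (auto intro!: divide_pos_pos mult_pos_pos add_nonneg_pos)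
    have "norm (xa \<alpha> - xdag) < \<eta>" if a: "\<alpha> > 0" "\<alpha> < b" for \<alpha>
    proof -
      define E where "E = norm (xa \<alpha> - xdag)^2"
      have E0: "E \<ge> 0" unfolding E_def by simp
      have key: "E \<le> norm (p - v) * d + 2*\<alpha>*d*norm w + norm v * k0 * E / 2"
        using step3[OF a(1) vw] unfolding E_def .
      have pv: "norm (p - v) < \<epsilon>" using v(2) by (simp add: dist_norm norm_minus_commute)
      have nv: "norm v \<le> d + \<epsilon>" using norm_triangle_ineq[of p "v - p"] pv
        unfolding d_def by (simp add: norm_minus_commute)
      have t1: "norm v * k0 * E / 2 \<le> (1 - c0) * E"
      proof (cases "k0 \<ge> 0")
        case True
        have "norm v * k0 \<le> (d + \<epsilon>) * k0" using nv True by (simp add: mult_right_mono)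
        also have "\<dots> = k0*d + k0*\<epsilon>" by (simp add: algebra_simps)
        also have "k0*\<epsilon> \<le> 2*c0"
        proof -
          have "k0*\<epsilon> \<le> k0 * (2*c0/(\<bar>k0\<bar>+1))" using mult_left_mono[OF \<epsilon>(2) True] by simp
          also have "\<dots> = 2*c0 * (k0/(k0+1))" using True by simp
          also have "\<dots> \<le> 2*c0" using c0 True by (intro mult_left_le) auto
          finally show ?thesis .
        qed
        then have "k0*d + k0*\<epsilon> \<le> 2*(1-c0)" using c0 by simp
        finally have "norm v * k0 \<le> 2*(1-c0)" by simp
        then have "norm v * k0 * E \<le> 2*(1-c0) * E" using E0 by (simp add: mult_right_mono)
        then show ?thesis by (simp add: algebra_simps)
      next
        case False
        then have "norm v * k0 * E \<le> 0" using E0 by (intro mult_nonpos_nonneg mult_nonneg_nonpos) auto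
        moreover have "(1 - c0) * E \<ge> 0" using c0 E0 by simp
        ultimately show ?thesis by simp
      qed
      have t2: "norm (p - v) * d < c0*\<eta>^2/2 \<or> d = 0"
      proof (cases "d = 0")
        case False
        then have "norm (p - v) * d < \<epsilon> * d" using pv d0 by simp
        also have "\<dots> \<le> c0*\<eta>^2/(2*(d+1)) * d" using mult_right_mono[OF \<epsilon>(3) d0] by simp
        also have "\<dots> \<le> c0*\<eta>^2/2"
        proof -
          have "c0*\<eta>^2/(2*(d+1)) * d = c0*\<eta>^2/2 * (d/(d+1))" by simp
          also have "\<dots> \<le> c0*\<eta>^2/2" using c0 d0 by (intro mult_left_le) auto
          finally show ?thesis .
        qed
        finally show ?thesis by simp
      qed simp
      have t3: "2*\<alpha>*d*norm w \<le> c0*\<eta>^2/2"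
      proof -
        have "2*\<alpha>*d*norm w \<le> 2*b*d*norm w" using a d0 by (simp add: mult_right_mono)
        also have "\<dots> = c0*\<eta>^2/2 * (d/(d+1)) * (norm w / (norm w + 1))"
          proof -
          have "d+1 > 0" "norm w + 1 > 0" using d0 by (auto intro: add_nonneg_pos)
          have aux: "\<And>X D W dd n::real. D > 0 \<Longrightarrow> W > 0 \<Longrightarrow> 2*(X/(4*D*W))*dd*n = X/2*(dd/D)*(n/W)"
            by (simp add: field_simps)
          show ?thesis unfolding b_def by (rule aux) fact+
        qed
        also have "\<dots> \<le> c0*\<eta>^2/2"
        proof -
          have nw1: "0 < norm w + 1" using norm_ge_zero[of w] by linarith
          have q1: "d/(d+1) \<le> 1" "norm w / (norm w + 1) \<le> 1" using d0 nw1 by (auto simp: divide_le_eq_1)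
          have q2: "norm w / (norm w + 1) \<ge> 0" using nw1 by simp
          have ab: "(d/(d+1)) * (norm w/(norm w+1)) \<le> 1" "c0*\<eta>^2/2 \<ge> 0"
            using mult_le_one[OF q1(1) q2 q1(2)] c0 by auto
          have "c0*\<eta>^2/2 * ((d/(d+1)) * (norm w/(norm w+1))) \<le> c0*\<eta>^2/2"
            by (rule mult_left_le[OF ab])
          then show ?thesis by (simp only: mult.assoc)
        qed
        finally show ?thesis .
      qed
      have "c0 * E < c0 * \<eta>^2"
      proof (cases "d = 0")
        case True
        then have "E = 0" using nb[OF a(1)] unfolding E_def by simp
        then show ?thesis using c0 \<eta> by simp
      next
        case False
        then show ?thesis using key t1 t2 t3 by (simp add: algebra_simps)
      qed
      then have "E < \<eta>^2" using c0 by simp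
      then show ?thesis unfolding E_def using \<eta> by (simp add: power_less_imp_less_base)
    qed
    then show "\<forall>\<^sub>F \<alpha> in at_right 0. dist (norm (xa \<alpha> - xdag)) 0 < \<eta>"
      unfolding eventually_at_right_field using b by (auto intro!: exI[of _ b])
  qed
qed

end
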